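(* Suppose $\tau_L > \delta_L + 1$ and $\delta_L > 0$. Let $K = \left[ -\lambda_L^s, m_{\rm max} \right]$ for some $m_{\rm max} \ge 0$. (i) If $m_{\rm max} \le m_{\rm crit}$ then $\Psi_K$ is invariant and expanding for $A_L$ with expansion factor $\lambda_L^u$. (ii) If $m_{\rm max} \le 1$ then $\Psi_K$ is invariant and expanding for $A_L$ with expansion factor $c_L = \min \left\{ \lambda_L^u, \frac{\lambda_L^u + 1}{\sqrt{2}} \right\}$.
   Context: Let $A_L = \begin{bmatrix} \tau_L & 1 \\ -\delta_L & 0 \end{bmatrix}$ with $\tau_L > \delta_L + 1$, $\delta_L > 0$, so its eigenvalues satisfy $0 < \lambda_L^s < 1 < \lambda_L^u$. Define $m_{\rm crit} = \lambda_L^s + \frac{2 \tau_L}{(\lambda_L^u)^2 - 1}$ (which is positive); it is the unique value $m \neq -\lambda_L^s$ for which $\|A_L v\| = \lambda_L^u \|v\|$ with $v = (1, m)^T$. A set $C \subset \mathbb{R}^2$ is a cone if $tv \in C$ for all $v \in C$, $t \in \mathbb{R}$. For an interval $K \subset \mathbb{R}$, $\Psi_K = \{ t (1, m)^T \mid m \in K, t \in \mathbb{R} \}$ (the cone of vectors with slope in $K$). A cone $C$ is invariant for a $2\times 2$ matrix $A$ if $Av \in C$ for all $v \in C$, and expanding with expansion factor $c > 1$ if $\|Av\| \ge c \|v\|$ for all $v \in C$ (Euclidean norm). *)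

theory Defs
  imports "HOL-Analysis.Analysis"
begin

definition A_L :: "real \<Rightarrow> real \<Rightarrow> real^2^2" where
  "A_L tau delta = vector [vector [tau, 1], vector [- delta, 0]]"

text \<open>Eigenvalues of A_L: roots of x^2 - tau x + delta = 0 (stable / unstable).\<close>
definition lambda_s :: "real \<Rightarrow> real \<Rightarrow> real" where
  "lambda_s tau delta = (tau - sqrt (tau\<^sup>2 - 4 * delta)) / 2"

definition lambda_u :: "real \<Rightarrow> real \<Rightarrow> real" where
  "lambda_u tau delta = (tau + sqrt (tau\<^sup>2 - 4 * delta)) / 2"

definition m_crit :: "real \<Rightarrow> real \<Rightarrow> real" where
  "m_crit tau delta = lambda_s tau delta + 2 * tau / ((lambda_u tau delta)\<^sup>2 - 1)"

definition Psi :: "real set \<Rightarrow> (real^2) set" where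
  "Psi K = {t *\<^sub>R vector [1, m] | t m. m \<in> K}"

definition invariant_cone :: "real^2^2 \<Rightarrow> (real^2) set \<Rightarrow> bool" where
  "invariant_cone A C \<longleftrightarrow> (\<forall>v\<in>C. A *v v \<in> C)"

definition expanding_cone :: "real^2^2 \<Rightarrow> (real^2) set \<Rightarrow> real \<Rightarrow> bool" where
  "expanding_cone A C c \<longleftrightarrow> c > 1 \<and> (\<forall>v\<in>C. norm (A *v v) \<ge> c * norm v)"

end

theory Submission
  imports Defs
begin

lemma norm2_vec2: "(norm (v::real^2))^2 = (v$1)^2 + (v$2)^2"
  by (simp add: norm_vec_def L2_set_def sum_2)

lemma Av: "A_L tau delta *v (t *\<^sub>R vector [1, m]) = vector [t*(tau+m), -t*delta]"
  by (simp add: vec_eq_iff forall_2 A_L_def matrix_vector_mult_def sum_2 algebra_simps)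

lemma concave_quad:
  fixes p q r a b m :: real
  assumes "p \<le> 0" "a \<le> m" "m \<le> b" "p*a^2+q*a+r \<ge> 0" "p*b^2+q*b+r \<ge> 0"
  shows "p*m^2+q*m+r \<ge> 0"
proof (cases "a = b")
  case True then show ?thesis using assms by simp
next
  case False
  have id: "(b-a)*(p*m^2+q*m+r) = (b-m)*(p*a^2+q*a+r) + (m-a)*(p*b^2+q*b+r) - p*(b-a)*(m-a)*(b-m)"
    by (simp add: algebra_simps power2_eq_square)
  have "0 \<le> (b-m)*(p*a^2+q*a+r) + (m-a)*(p*b^2+q*b+r) - p*(b-a)*(m-a)*(b-m)"
  proof -
    have "0 \<le> (b-m)*(p*a^2+q*a+r)" using assms by simp
    moreover have "0 \<le> (m-a)*(p*b^2+q*b+r)" using assms by simp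
    moreover have "0 \<le> -p*((b-a)*(m-a)*(b-m))" using assms by (intro mult_nonneg_nonneg) auto
    ultimately show ?thesis by (simp add: algebra_simps)
  qed
  with id have "0 \<le> (b-a)*(p*m^2+q*m+r)" by simp
  moreover have "b - a > 0" using assms False by simp
  ultimately show ?thesis by (simp add: zero_le_mult_iff)
qed

lemma core:
  fixes ls lu D m b :: real
  assumes "ls > 0" "lu > 1" "1 \<le> D" "D \<le> lu^2" "-ls \<le> m" "m \<le> b"
    and hb: "(ls+lu+b)^2 + (ls*lu)^2 - D*(1+b^2) \<ge> 0"
  shows "(ls+lu+m)^2 + (ls*lu)^2 \<ge> D*(1+m^2)"
proof -
  have "(1-D)*m^2 + (2*(ls+lu))*m + ((ls+lu)^2+(ls*lu)^2-D) \<ge> 0"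
  proof (rule concave_quad[where a="-ls" and b=b])
    show "(1-D)*(-ls)^2 + (2*(ls+lu))*(-ls) + ((ls+lu)^2+(ls*lu)^2-D) \<ge> 0"
    proof -
      have "(1-D)*(-ls)^2 + (2*(ls+lu))*(-ls) + ((ls+lu)^2+(ls*lu)^2-D) = (lu^2 - D)*(1+ls^2)"
        by (simp add: algebra_simps power2_eq_square)
      also have "\<dots> \<ge> 0" using assms by simp
      finally show ?thesis .
    qed
    show "(1-D)*b^2 + (2*(ls+lu))*b + ((ls+lu)^2+(ls*lu)^2-D) \<ge> 0"
      using hb by (simp add: algebra_simps power2_eq_square)
  qed (use assms in auto)
  then show ?thesis by (simp add: algebra_simps power2_eq_square)
qed


lemma cone_gen:
  fixes tau delta ls lu mmax c :: real
  assumes "tau = ls+lu" "delta = ls*lu" "ls > 0" "lu > 1" "mmax \<ge> 0" "c > 1"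
    and H: "\<And>m. -ls \<le> m \<Longrightarrow> m \<le> mmax \<Longrightarrow> c^2*(1+m^2) \<le> (tau+m)^2+delta^2"
  shows "invariant_cone (A_L tau delta) (Psi {-ls..mmax}) \<and> expanding_cone (A_L tau delta) (Psi {-ls..mmax}) c"
proof -
  have inv: "A_L tau delta *v v \<in> Psi {-ls..mmax}" and ex: "norm (A_L tau delta *v v) \<ge> c * norm v"
    if "v \<in> Psi {-ls..mmax}" for v
  proof -
    from that obtain t m where v: "v = t *\<^sub>R vector [1, m]" and m: "-ls \<le> m" "m \<le> mmax"
      unfolding Psi_def by auto
    have pos: "tau + m \<ge> lu" using assms m by simp
    have Av: "A_L tau delta *v v = vector [t*(tau+m), -t*delta]" using v Av by simp
    have sl: "-ls \<le> -delta/(tau+m)"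
    proof -
      have "delta \<le> ls*(tau+m)" using assms pos by (simp add: mult_left_mono)
      then have "delta/(tau+m) \<le> ls" using pos assms by (simp add: divide_simps)
      then show ?thesis by simp
    qed
    have sl2: "-delta/(tau+m) \<le> mmax"
    proof -
      have "delta/(tau+m) \<ge> 0" using assms pos by simp
      then show ?thesis using assms by simp
    qed
    have "A_L tau delta *v v = (t*(tau+m)) *\<^sub>R vector [1, -delta/(tau+m)]"
      unfolding Av using pos assms by (simp add: vec_eq_iff forall_2)
    then show "A_L tau delta *v v \<in> Psi {-ls..mmax}" unfolding Psi_def mem_Collect_eq
      by (intro exI[of _ "t*(tau+m)"] exI[of _ "-delta/(tau+m)"]) (use sl sl2 in auto)
    have n1: "(norm (A_L tau delta *v v))^2 = t^2*((tau+m)^2+delta^2)"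
      unfolding norm2_vec2 Av by (simp add: algebra_simps power2_eq_square)
    have n2: "(norm v)^2 = t^2*(1+m^2)"
      unfolding norm2_vec2 v by (simp add: algebra_simps power2_eq_square)
    have "(c * norm v)^2 \<le> (norm (A_L tau delta *v v))^2"
    proof -
      have "t^2 * (c^2*(1+m^2)) \<le> t^2*((tau+m)^2+delta^2)" by (rule mult_left_mono[OF H[OF m]]) simp
      then show ?thesis unfolding n1 power_mult_distrib n2 by (simp add: ac_simps)
    qed
    then show "norm (A_L tau delta *v v) \<ge> c * norm v"
      by (rule power2_le_imp_le) simp
  qed
  show ?thesis unfolding invariant_cone_def expanding_cone_def using inv ex assms by auto
qed

theorem lemma4p1:
  fixes tau delta m_max :: real
  assumes "tau > delta + 1" and "delta > 0" and "m_max \<ge> 0"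
  shows "(m_max \<le> m_crit tau delta \<longrightarrow>
            invariant_cone (A_L tau delta) (Psi {- lambda_s tau delta .. m_max}) \<and>
            expanding_cone (A_L tau delta) (Psi {- lambda_s tau delta .. m_max}) (lambda_u tau delta))
       \<and> (m_max \<le> 1 \<longrightarrow>
            invariant_cone (A_L tau delta) (Psi {- lambda_s tau delta .. m_max}) \<and>
            expanding_cone (A_L tau delta) (Psi {- lambda_s tau delta .. m_max})
              (min (lambda_u tau delta) ((lambda_u tau delta + 1) / sqrt 2)))"
proof -
  define s where "s = sqrt (tau^2 - 4*delta)"
  define ls where "ls = lambda_s tau delta"
  define lu where "lu = lambda_u tau delta"
  have d: "tau^2 - 4*delta > (2 - tau)^2" using assms by (simp add: power2_eq_square algebra_simps)
  have d0: "(2 - tau)^2 \<ge> 0" by simp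
  have dp: "tau^2 - 4*delta > 0" using d d0 by linarith
  have s0: "s \<ge> 0" unfolding s_def using dp by simp
  have s2: "s^2 = tau^2 - 4*delta" unfolding s_def using dp by simp
  have "s > \<bar>2 - tau\<bar>"
  proof -
    have "sqrt ((2-tau)^2) < s" unfolding s_def using d by (rule real_sqrt_less_mono)
    then show ?thesis by simp
  qed
  then have lu1: "lu > 1" unfolding lu_def lambda_u_def s_def[symmetric] by (simp add: abs_if split: if_splits)
  have "s < tau"
  proof -
    have "s < sqrt (tau^2)" unfolding s_def using assms by (intro real_sqrt_less_mono) simp
    then show ?thesis using assms by simp
  qed
  then have ls0: "ls > 0" unfolding ls_def lambda_s_def s_def[symmetric] by simp
  have tau: "tau = ls + lu" unfolding ls_def lu_def lambda_s_def lambda_u_def by (simp add: field_simps)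
  have del: "delta = ls * lu" unfolding ls_def lu_def lambda_s_def lambda_u_def s_def[symmetric]
    using s2 by (simp add: field_simps power2_eq_square)
  have mc: "m_crit tau delta = ls + 2*(ls+lu)/(lu^2-1)" unfolding m_crit_def ls_def[symmetric] lu_def[symmetric]
    using tau by simp
  have lu21: "lu^2 - 1 > 0" using lu1 by (simp add: power2_eq_square) (smt (verit) mult_less_cancel_left1)
  have P1: "invariant_cone (A_L tau delta) (Psi {- lambda_s tau delta .. m_max}) \<and>
            expanding_cone (A_L tau delta) (Psi {- lambda_s tau delta .. m_max}) (lambda_u tau delta)" if hm: "m_max \<le> m_crit tau delta"
  proof -
    have "lu^2*(1+m^2) \<le> (tau+m)^2+delta^2" if m: "-ls \<le> m" "m \<le> m_max" for m
    proof (rule core[OF ls0 lu1 _ order_refl m, unfolded tau[symmetric] del[symmetric]])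
      show "1 \<le> lu^2" using lu21 by simp
      have "(tau+m_max)^2 + delta^2 - lu^2*(1+m_max^2) = (m_max+ls)*((lu^2-1)*(ls-m_max) + 2*(ls+lu))"
        unfolding tau del by (simp add: algebra_simps power2_eq_square)
      also have "\<dots> = (lu^2-1)*(m_max+ls)*(m_crit tau delta - m_max)"
        unfolding mc using lu21 by (simp add: field_simps)
      also have "\<dots> \<ge> 0" using lu21 hm ls0 assms by (intro mult_nonneg_nonneg) auto
      finally show "(tau+m_max)^2 + delta^2 - lu^2*(1+m_max^2) \<ge> 0" .
    qed
    then show ?thesis
      using cone_gen[OF tau del ls0 lu1 assms(3) lu1] unfolding ls_def lu_def by simp
  qed
  have P2: "invariant_cone (A_L tau delta) (Psi {- lambda_s tau delta .. m_max}) \<and>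
            expanding_cone (A_L tau delta) (Psi {- lambda_s tau delta .. m_max})
              (min (lambda_u tau delta) ((lambda_u tau delta + 1) / sqrt 2))" if h1: "m_max \<le> 1"
  proof -
    define c where "c = min lu ((lu+1)/sqrt 2)"
    have sq2: "sqrt 2 < 2"
    proof -
      have "sqrt 2 < sqrt 4" by (rule real_sqrt_less_mono) simp
      then show ?thesis by (simp only: real_sqrt_four)
    qed
    have c1: "c > 1" unfolding c_def using lu1 sq2 by (simp add: field_simps)
    have clu: "c \<le> lu" unfolding c_def by simp
    have c2: "2*c^2 \<le> (lu+1)^2"
    proof -
      have "c \<le> (lu+1)/sqrt 2" unfolding c_def by simp
      then have "c^2 \<le> ((lu+1)/sqrt 2)^2" using c1 by (intro power_mono) auto
      also have "\<dots> = (lu+1)^2/2" by (simp add: power_divide)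
      finally show ?thesis by simp
    qed
    have "c^2*(1+m^2) \<le> (tau+m)^2+delta^2" if m: "-ls \<le> m" "m \<le> m_max" for m
    proof (rule core[OF ls0 lu1 _ _ m(1), of _ 1, unfolded tau[symmetric] del[symmetric]])
      show "1 \<le> c^2" using c1 by (simp add: one_le_power)
      show "c^2 \<le> lu^2" using c1 clu by (intro power_mono) auto
      show "m \<le> 1" using m h1 by simp
      have "(lu+1)^2 \<le> (tau+1)^2" unfolding tau using ls0 lu1 by (intro power_mono) auto
      moreover have "delta^2 \<ge> 0" by simp
      moreover have "c^2*(1+1^2) = 2*c^2" by simp
      ultimately show "(tau+1)^2 + delta^2 - c^2*(1+1^2) \<ge> 0" using c2 by linarith
    qed
    then show ?thesis
      using cone_gen[OF tau del ls0 lu1 assms(3) c1] unfolding ls_def lu_def c_def by simp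
  qed
  show ?thesis using P1 P2 by blast
qed
end
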